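(* Let $\mathcal H_A,\mathcal H_B$ be finite-dimensional Hilbert spaces and $U$ a unitary on $\mathcal H_A\otimes\mathcal H_B$. Then $U$ is a generalized thermal unitary if and only if there exist full-rank density operators $\alpha$ on $\mathcal H_A$ and $\beta$ on $\mathcal H_B$, not both maximally mixed, and density operators $\alpha'$ on $\mathcal H_A$, $\beta'$ on $\mathcal H_B$, such that $U(\alpha\otimes\beta)U^\dagger=\alpha'\otimes\beta'$.
   Context: A unitary $U$ on $\mathcal H_A\otimes\mathcal H_B$ is a generalized thermal unitary if there exist Hermitian operators $H_A,H_A'$ on $\mathcal H_A$ and $H_B,H_B'$ on $\mathcal H_B$, with at least one of $H_A,H_B$ not proportional to the identity, such that $U(H_A\otimes\mathbb 1+\mathbb 1\otimes H_B)U^\dagger=H_A'\otimes\mathbb 1+\mathbb 1\otimes H_B'$. *)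

theory Defs
  imports "HOL-Analysis.Analysis"
begin

text \<open>Finite-dimensional Hilbert spaces are modelled as C^'a with 'a a finite index type;
operators are complex matrices indexed by 'a. The bipartite space H_A (x) H_B is
C^('a \<times> 'b).\<close>

type_synonym 'a cmat = "complex^'a^'a"

definition dagger :: "('a::finite) cmat \<Rightarrow> 'a cmat" where
  "dagger A = (\<chi> i j. cnj (A $ j $ i))"

definition tensor :: "('a::finite) cmat \<Rightarrow> ('b::finite) cmat \<Rightarrow> ('a \<times> 'b) cmat" where
  "tensor A B = (\<chi> p q. A $ fst p $ fst q * B $ snd p $ snd q)"

definition unitary :: "('a::finite) cmat \<Rightarrow> bool" where
  "unitary U \<longleftrightarrow> U ** dagger U = mat 1 \<and> dagger U ** U = mat 1"

definition hermitian :: "('a::finite) cmat \<Rightarrow> bool" where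
  "hermitian H \<longleftrightarrow> dagger H = H"

definition positive_semidef :: "('a::finite) cmat \<Rightarrow> bool" where
  "positive_semidef A \<longleftrightarrow> hermitian A \<and>
     (\<forall>v :: complex^'a. 0 \<le> Re (\<Sum>i\<in>UNIV. cnj (v $ i) * (A *v v) $ i))"

definition density_op :: "('a::finite) cmat \<Rightarrow> bool" where
  "density_op \<rho> \<longleftrightarrow> positive_semidef \<rho> \<and> trace \<rho> = 1"

definition full_rank :: "('a::finite) cmat \<Rightarrow> bool" where
  "full_rank \<rho> \<longleftrightarrow> invertible \<rho>"

definition maximally_mixed :: "('a::finite) cmat \<Rightarrow> bool" where
  "maximally_mixed \<rho> \<longleftrightarrow> \<rho> = mat (1 / of_nat CARD('a))"

definition generalized_thermal_unitary :: "('a::finite \<times> 'b::finite) cmat \<Rightarrow> bool" where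
  "generalized_thermal_unitary U \<longleftrightarrow> unitary U \<and>
     (\<exists>(HA :: 'a cmat) HA' (HB :: 'b cmat) HB'.
        hermitian HA \<and> hermitian HA' \<and> hermitian HB \<and> hermitian HB' \<and>
        ((\<nexists>c. HA = mat c) \<or> (\<nexists>c. HB = mat c)) \<and>
        U ** (tensor HA (mat 1) + tensor (mat 1) HB) ** dagger U
          = tensor HA' (mat 1) + tensor (mat 1) HB')"

end

theory Submission
  imports Defs
begin

definition cinner :: "complex^'n::finite \<Rightarrow> complex^'n \<Rightarrow> complex" where
  "cinner x y = (\<Sum>i\<in>UNIV. cnj (x $ i) * y $ i)"

definition diag :: "('n::finite \<Rightarrow> complex) \<Rightarrow> 'n cmat" where
  "diag d = (\<chi> i j. if i = j then d i else 0)"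

lemma Re_cinner: "Re (cinner x y) = x \<bullet> y"
  by (simp add: cinner_def inner_vec_def inner_complex_def Re_sum)

lemma cinner_self: "cinner x x = complex_of_real (x \<bullet> x)"
proof -
  have "Im (cinner x x) = 0" by (simp add: cinner_def Im_sum)
  then show ?thesis using Re_cinner[of x x] by (simp add: complex_eq_iff)
qed

lemma cinner_cnj: "cinner x y = cnj (cinner y x)"
  by (simp add: cinner_def mult.commute)

lemma cinner_dagger: "cinner x (H *v y) = cinner (dagger H *v x) y"
  by (simp add: cinner_def dagger_def matrix_vector_mult_def sum_distrib_left sum_distrib_right
      mult_ac cnj_sum) (rule sum.swap)

lemma cinner_herm: "hermitian H \<Longrightarrow> cinner x (H *v y) = cinner (H *v x) y"
  by (metis cinner_dagger hermitian_def)

lemma cinner_add_right: "cinner x (y + z) = cinner x y + cinner x z"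
  by (simp add: cinner_def distrib_left sum.distrib)

lemma scaleR_c: "(c::real) *\<^sub>R (z::complex) = complex_of_real c * z"
  by (simp add: scaleR_conv_of_real)

lemma scaleR_comp_c: "((c::real) *\<^sub>R (x::complex^'n)) $ i = complex_of_real c * x $ i"
  by (simp add: scaleR_c)

lemma cinner_scaleR_right: "cinner x (c *\<^sub>R y) = of_real c * cinner x y"
  unfolding cinner_def sum_distrib_left
  by (rule sum.cong) (auto simp: scaleR_c)

lemma cinner_smult_left: "cinner (c *s x) y = cnj c * cinner x y"
  by (simp add: cinner_def sum_distrib_left mult_ac)

lemma mat_vec_scaleR: "(H::complex^'n^'m) *v (c *\<^sub>R x) = c *\<^sub>R (H *v x)"
  by (simp add: vec_eq_iff matrix_vector_mult_def scaleR_c sum_distrib_left mult_ac)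

lemma dagger_mult: "dagger (A ** B) = dagger B ** dagger A"
  by (simp add: vec_eq_iff dagger_def matrix_matrix_mult_def cnj_sum mult.commute)

lemma dagger_dagger[simp]: "dagger (dagger A) = A"
  by (simp add: vec_eq_iff dagger_def)

lemma dagger_mat[simp]: "dagger (mat (of_real c)) = mat (of_real c)"
  by (simp add: vec_eq_iff dagger_def mat_def)

lemma dagger_diag: "dagger (diag d) = diag (\<lambda>i. cnj (d i))"
  by (simp add: vec_eq_iff dagger_def diag_def)

lemma diag_real_herm: "dagger (diag (\<lambda>i. complex_of_real (d i))) = diag (\<lambda>i. complex_of_real (d i))"
  by (simp add: dagger_diag)

lemma small_arith:
  fixes r C :: real
  assumes h: "\<And>e. 2*e*r \<le> e^2 * C"
  shows "r = 0"
proof -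
  define D where "D = \<bar>C\<bar> + 1"
  have D: "D > 0" "C \<le> D - 1" unfolding D_def by auto
  have "2*(r/D)*r \<le> (r/D)^2 * C" by (rule h)
  then have "(2*(r/D)*r) * D^2 \<le> ((r/D)^2 * C) * D^2" by (rule mult_right_mono) simp
  then have "2 * r^2 * D \<le> r^2 * C" using D by (simp add: power2_eq_square field_simps)
  also have "\<dots> \<le> r^2 * (D - 1)" using D by (simp add: mult_left_mono)
  finally have "r^2 * (D + 1) \<le> 0" by (simp add: algebra_simps)
  then have "r^2 \<le> 0" using D by (simp add: mult_le_0_iff)
  then show ?thesis by simp
qed

definition eigsys :: "'n::finite cmat \<Rightarrow> (complex^'n) set \<Rightarrow> bool" where
  "eigsys H B \<longleftrightarrow> finite B \<and> (\<forall>v\<in>B. cinner v v = 1 \<and> (\<exists>l::real. H *v v = of_real l *s v)) \<and>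
     (\<forall>u\<in>B. \<forall>v\<in>B. u \<noteq> v \<longrightarrow> cinner u v = 0)"

lemma cinner_zero_right[simp]: "cinner x 0 = 0"
  by (simp add: cinner_def)

lemma cinner_diff_right: "cinner x (y - z) = cinner x y - cinner x z"
  by (simp add: cinner_def right_diff_distrib sum_subtractf)

lemma eig_step:
  fixes H :: "'n::finite cmat"
  assumes herm: "hermitian H" and es: "eigsys H B" and cardB: "card B < CARD('n)"
  shows "\<exists>v. v \<notin> B \<and> eigsys H (insert v B)"
proof -
  define S where "S = {w. \<forall>b\<in>B. cinner b w = 0}"
  have subS: "subspace S"
    unfolding subspace_def S_def by (simp add: cinner_add_right cinner_scaleR_right)
  have finB: "finite B" using es eigsys_def by blast
  obtain a where a0: "a \<noteq> 0" and aS: "a \<in> S"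
  proof -
    define T where "T = B \<union> (\<lambda>b. \<i> *s b) ` B"
    have finT: "finite T" using finB T_def by simp
    have "card T \<le> card B + card B"
      unfolding T_def by (metis card_Un_le card_image_le finB add_left_mono order_trans)
    also have "\<dots> < DIM(complex^'n)" using cardB by (simp add: DIM_cart DIM_complex)
    finally have "card T < DIM(complex^'n)" .
    then have "span T \<noteq> UNIV"
      using dim_le_card'[OF finT] dim_eq_full[of T] by auto
    then obtain a where a0: "a \<noteq> 0" and ax: "\<forall>x\<in>span T. a \<bullet> x = 0"
      using span_not_UNIV_orthogonal by blast
    have "cinner b a = 0" if b: "b \<in> B" for b
    proof -
      have "b \<in> T" "\<i> *s b \<in> T" using b T_def by auto
      then have "a \<bullet> b = 0" "a \<bullet> (\<i> *s b) = 0" using ax span_base by blast+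
      then have "Re (cinner b a) = 0" "Re (cinner (\<i> *s b) a) = 0"
        by (simp_all add: Re_cinner inner_commute)
      then show ?thesis by (simp add: cinner_smult_left complex_eq_iff)
    qed
    then have "a \<in> S" unfolding S_def by blast
    then show ?thesis using that a0 by blast
  qed
  define q where "q = (\<lambda>v. v \<bullet> (H *v v))"
  define K where "K = S \<inter> sphere 0 1"
  have cK: "compact K" unfolding K_def
    by (rule closed_Int_compact[OF closed_subspace[OF subS] compact_sphere])
  have "(inverse (norm a)) *\<^sub>R a \<in> K"
    unfolding K_def using aS a0 subspace_scale[OF subS] by auto
  then have neK: "K \<noteq> {}" by blast
  have contq: "continuous_on K q"
    unfolding q_def by (intro continuous_intros matrix_vector_mult_linear_continuous_on)
  obtain v where vK: "v \<in> K" and vmax: "\<forall>y\<in>K. q y \<le> q v"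
    using continuous_attains_sup[OF cK neK contq] by blast
  define l where "l = q v"
  have vS: "v \<in> S" and nv: "norm v = 1" using vK K_def by auto
  have vv: "v \<bullet> v = 1" using nv by (simp add: power2_norm_eq_inner[symmetric])
  have qscale: "q (c *\<^sub>R u) = c^2 * q u" for c u
    by (simp add: q_def mat_vec_scaleR power2_eq_square)
  have bound: "q u \<le> l * (u \<bullet> u)" if uS: "u \<in> S" for u
  proof (cases "u = 0")
    case True then show ?thesis by (simp add: q_def)
  next
    case False
    define c where "c = inverse (norm u)"
    have "c *\<^sub>R u \<in> K" unfolding K_def c_def using uS False subspace_scale[OF subS] by auto
    then have "q (c *\<^sub>R u) \<le> l" using vmax l_def by blast
    then have "c^2 * q u \<le> l" by (simp add: qscale)
    moreover have "c^2 * (u \<bullet> u) = 1" unfolding c_def using False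
      by (simp add: power2_norm_eq_inner[symmetric] field_simps)
    moreover have "c^2 > 0" unfolding c_def using False by simp
    ultimately have "c^2 * q u \<le> c^2 * (l * (u \<bullet> u))" by (simp add: algebra_simps)
    then show ?thesis using \<open>c^2 > 0\<close> by simp
  qed
  have HvS: "H *v v \<in> S"
    unfolding S_def mem_Collect_eq
  proof
    fix b assume b: "b \<in> B"
    then obtain lb :: real where lb: "H *v b = of_real lb *s b" using es eigsys_def by blast
    have "cinner b v = 0" using vS b S_def by blast
    then show "cinner b (H *v v) = 0"
      by (simp add: cinner_herm[OF herm] lb cinner_smult_left)
  qed
  define w where "w = H *v v - l *\<^sub>R v"
  have wS: "w \<in> S" unfolding w_def using HvS vS subspace_diff[OF subS] subspace_scale[OF subS] by blast
  have Hv: "H *v v = w + l *\<^sub>R v" unfolding w_def by simp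
  have sym: "x \<bullet> (H *v y) = y \<bullet> (H *v x)" for x y
  proof -
    have "x \<bullet> (H *v y) = Re (cinner x (H *v y))" by (simp add: Re_cinner)
    also have "\<dots> = Re (cinner (H *v x) y)" by (simp add: cinner_herm[OF herm])
    also have "\<dots> = Re (cinner y (H *v x))" by (subst cinner_cnj) simp
    finally show ?thesis by (simp add: Re_cinner)
  qed
  have wv: "w \<bullet> v = 0"
  proof -
    have "w \<bullet> v = (H *v v) \<bullet> v - l * (v \<bullet> v)" unfolding w_def by (simp add: inner_diff_left)
    also have "\<dots> = 0" using vv l_def q_def by (simp add: inner_commute)
    finally show ?thesis .
  qed
  have wHv: "w \<bullet> (H *v v) = w \<bullet> w" using wv by (simp add: Hv inner_add_right)
  have ineq: "2*e*(w \<bullet> w) \<le> e^2 * (l * (w \<bullet> w) - q w)" for e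
  proof -
    define u where "u = v + e *\<^sub>R w"
    have uS: "u \<in> S" unfolding u_def using vS wS subspace_add[OF subS] subspace_scale[OF subS] by blast
    have qu: "q u = l + 2*e*(w \<bullet> w) + e^2 * q w"
    proof -
      have "q u = v \<bullet> (H *v v) + e * (v \<bullet> (H *v w)) + e * (w \<bullet> (H *v v)) + e^2 * q w"
        unfolding q_def u_def
        by (simp add: matrix_vector_right_distrib mat_vec_scaleR inner_add_left inner_add_right
            power2_eq_square algebra_simps)
      then show ?thesis using sym[of v w] wHv l_def q_def by simp
    qed
    have uu: "u \<bullet> u = 1 + e^2 * (w \<bullet> w)"
      unfolding u_def using vv wv
      by (simp add: inner_add_left inner_add_right inner_commute power2_eq_square algebra_simps)
    from bound[OF uS] qu uu show ?thesis by (simp add: algebra_simps)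
  qed
  have "w \<bullet> w = 0" by (rule small_arith[OF ineq])
  then have w0: "w = 0" by simp
  then have Hv': "H *v v = of_real l *s v"
    using Hv by (simp add: vec_eq_iff scaleR_c)
  have cvv: "cinner v v = 1" using vv by (simp add: cinner_self)
  have vnB: "v \<notin> B" using vS cvv S_def by auto
  have "eigsys H (insert v B)"
    unfolding eigsys_def
  proof (intro conjI)
    show "finite (insert v B)" using finB by simp
    show "\<forall>x\<in>insert v B. cinner x x = 1 \<and> (\<exists>l::real. H *v x = of_real l *s x)"
      using es eigsys_def cvv Hv' by auto
    have vb: "cinner b v = 0" "cinner v b = 0" if "b \<in> B" for b
      using vS that S_def cinner_cnj[of v b] by auto
    show "\<forall>x\<in>insert v B. \<forall>y\<in>insert v B. x \<noteq> y \<longrightarrow> cinner x y = 0"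
      using es[unfolded eigsys_def] vb by auto
  qed
  then show ?thesis using vnB by blast
qed

lemma eig_exists:
  fixes H :: "'n::finite cmat"
  assumes herm: "hermitian H"
  shows "k \<le> CARD('n) \<Longrightarrow> \<exists>B. eigsys H B \<and> card B = k"
proof (induction k)
  case 0
  have "eigsys H {}" by (simp add: eigsys_def)
  then show ?case by force
next
  case (Suc k)
  then obtain B where B: "eigsys H B" "card B = k" by auto
  then obtain v where "v \<notin> B" "eigsys H (insert v B)"
    using eig_step[OF herm B(1)] Suc.prems by auto
  moreover have "card (insert v B) = Suc k" using B[unfolded eigsys_def] \<open>v \<notin> B\<close> by auto
  ultimately show ?case by blast
qed

lemma sum_delta_r: "(\<Sum>k\<in>(UNIV::'n::finite set). f k * (if k = j then g k else 0)) = (f j * g j :: complex)"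
proof -
  have "(\<Sum>k\<in>(UNIV::'n set). f k * (if k = j then g k else 0)) = (\<Sum>k\<in>UNIV. if k = j then f k * g k else 0)"
    by (rule sum.cong) auto
  then show ?thesis by simp
qed

lemma sum_delta_l: "(\<Sum>k\<in>(UNIV::'n::finite set). (if i = k then g k else 0) * f k) = (g i * f i :: complex)"
proof -
  have "(\<Sum>k\<in>(UNIV::'n set). (if i = k then g k else 0) * f k) = (\<Sum>k\<in>UNIV. if i = k then g k * f k else 0)"
    by (rule sum.cong) auto
  then show ?thesis by simp
qed

lemma mat_mult_diag: "(A ** diag d) $ i $ j = A $ i $ j * d j"
  by (simp add: matrix_matrix_mult_def diag_def sum_delta_r)

lemma diag_mat_mult: "(diag d ** A) $ i $ j = d i * A $ i $ j"
  by (simp add: matrix_matrix_mult_def diag_def sum_delta_l)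

lemma unitary_left: "dagger V ** V = mat 1 \<Longrightarrow> unitary (V::'n::finite cmat)"
  unfolding unitary_def using matrix_left_right_inverse by blast

lemma spectral:
  fixes H :: "'n::finite cmat"
  assumes herm: "hermitian H"
  shows "\<exists>V d. unitary V \<and> H = V ** diag (\<lambda>i. complex_of_real (d i)) ** dagger V"
proof -
  obtain B where B: "eigsys H B" "card B = CARD('n)" using eig_exists[OF herm] by blast
  have finB: "finite B" using B(1)[unfolded eigsys_def] by blast
  obtain h where h: "bij_betw h (UNIV::'n set) B"
    using finite_same_card_bij[OF finite finB] B(2) by auto
  have "\<forall>v\<in>B. \<exists>l::real. H *v v = of_real l *s v" using B(1)[unfolded eigsys_def] by blast
  then obtain lam where lam: "\<forall>v\<in>B. H *v v = of_real (lam v) *s v" by metis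
  define V :: "'n cmat" where "V = (\<chi> i j. h j $ i)"
  define d where "d = (\<lambda>j. lam (h j))"
  have hB: "h j \<in> B" for j using h by (simp add: bij_betw_apply)
  have hinj: "h j = h k \<Longrightarrow> j = k" for j k using h by (auto simp: bij_betw_def inj_on_def)
  have "dagger V ** V = mat 1"
  proof -
    have "(dagger V ** V) $ j $ k = (if j = k then 1 else 0)" for j k
    proof -
      have "(dagger V ** V) $ j $ k = cinner (h j) (h k)"
        by (simp add: matrix_matrix_mult_def dagger_def V_def cinner_def)
      also have "\<dots> = (if j = k then 1 else 0)"
      proof (cases "j = k")
        case True then show ?thesis using B(1) hB unfolding eigsys_def by simp
      next
        case False
        then have "h j \<noteq> h k" using hinj by blast
        then show ?thesis using B(1) hB False unfolding eigsys_def by simp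
      qed
      finally show ?thesis .
    qed
    then show ?thesis by (simp add: vec_eq_iff mat_def)
  qed
  then have U: "unitary V" by (rule unitary_left)
  have HV: "H ** V = V ** diag (\<lambda>i. complex_of_real (d i))"
  proof -
    have "(H ** V) $ i $ j = (V ** diag (\<lambda>i. complex_of_real (d i))) $ i $ j" for i j
    proof -
      have "(H ** V) $ i $ j = (H *v h j) $ i"
        by (simp add: matrix_matrix_mult_def matrix_vector_mult_def V_def)
      also have "\<dots> = of_real (d j) * h j $ i" using lam hB[of j] unfolding d_def by (simp add: vec_eq_iff)
      finally show ?thesis by (simp add: mat_mult_diag V_def)
    qed
    then show ?thesis by (simp add: vec_eq_iff)
  qed
  have "H = H ** (V ** dagger V)" using U[unfolded unitary_def] by simp
  also have "\<dots> = V ** diag (\<lambda>i. complex_of_real (d i)) ** dagger V"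
    by (simp add: matrix_mul_assoc HV)
  finally show ?thesis using U by blast
qed

lemma conj_lemma:
  fixes V W :: "'n::finite cmat"
  assumes V: "unitary V" and W: "unitary W"
    and eq: "V ** diag d ** dagger V = W ** diag e ** dagger W"
  shows "(dagger W ** V) ** diag d = diag e ** (dagger W ** V)"
proof -
  have V1: "dagger V ** V = mat 1" and W1: "dagger W ** W = mat 1"
    using V W unitary_def by auto
  have "(dagger W ** V) ** diag d = (dagger W ** V) ** diag d ** (dagger V ** V)"
    using V1 by simp
  also have "\<dots> = dagger W ** (V ** diag d ** dagger V) ** V" by (simp only: matrix_mul_assoc)
  also have "\<dots> = dagger W ** (W ** diag e ** dagger W) ** V" by (simp only: eq)
  also have "\<dots> = (dagger W ** W) ** diag e ** (dagger W ** V)" by (simp only: matrix_mul_assoc)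
  also have "\<dots> = diag e ** (dagger W ** V)" using W1 by simp
  finally show ?thesis .
qed

lemma fc_welldef:
  fixes V W :: "'n::finite cmat"
  assumes V: "unitary V" and W: "unitary W"
    and eq: "V ** diag d ** dagger V = W ** diag e ** dagger W"
  shows "V ** diag (\<lambda>i. f (d i)) ** dagger V = W ** diag (\<lambda>i. f (e i)) ** dagger W"
proof -
  define X where "X = dagger W ** V"
  have V1: "V ** dagger V = mat 1" and W1: "W ** dagger W = mat 1"
    using V W unitary_def by auto
  have XD: "X ** diag d = diag e ** X" unfolding X_def by (rule conj_lemma[OF V W eq])
  have ent: "X $ i $ j * d j = e i * X $ i $ j" for i j
    using arg_cong[OF XD, of "\<lambda>M. M $ i $ j"] by (simp add: mat_mult_diag diag_mat_mult)
  have XF: "X ** diag (\<lambda>i. f (d i)) = diag (\<lambda>i. f (e i)) ** X"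
  proof -
    have "X $ i $ j * f (d j) = f (e i) * X $ i $ j" for i j
    proof (cases "X $ i $ j = 0")
      case True then show ?thesis by simp
    next
      case False
      then have "d j = e i" using ent[of i j] by (simp add: mult.commute)
      then show ?thesis by (simp add: mult.commute)
    qed
    then show ?thesis by (simp add: vec_eq_iff mat_mult_diag diag_mat_mult)
  qed
  have WX: "W ** X = V" unfolding X_def using W1 by (simp add: matrix_mul_assoc)
  have XV: "X ** dagger V = dagger W" unfolding X_def using V1 by (simp add: matrix_mul_assoc[symmetric])
  have "V ** diag (\<lambda>i. f (d i)) ** dagger V = W ** (X ** diag (\<lambda>i. f (d i))) ** dagger V"
    using WX by (simp add: matrix_mul_assoc)
  also have "\<dots> = W ** diag (\<lambda>i. f (e i)) ** (X ** dagger V)"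
    by (simp add: XF matrix_mul_assoc)
  also have "\<dots> = W ** diag (\<lambda>i. f (e i)) ** dagger W" using XV by simp
  finally show ?thesis .
qed

lemma fc_spec:
  fixes V W :: "'n::finite cmat"
  assumes V: "unitary V" and W: "unitary W"
    and eq: "V ** diag d ** dagger V = W ** diag e ** dagger W"
  shows "\<exists>j. e i = d j"
proof (rule ccontr)
  assume ne: "\<nexists>j. e i = d j"
  define X where "X = dagger W ** V"
  have XD: "X ** diag d = diag e ** X" unfolding X_def by (rule conj_lemma[OF V W eq])
  have ent: "X $ i $ j * d j = e i * X $ i $ j" for j
    using arg_cong[OF XD, of "\<lambda>M. M $ i $ j"] by (simp add: mat_mult_diag diag_mat_mult)
  have z: "X $ i $ j = 0" for j
  proof -
    have "X $ i $ j * (d j - e i) = 0" using ent[of j] by (simp add: algebra_simps)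
    moreover have "d j - e i \<noteq> 0" using ne by (metis right_minus_eq)
    ultimately show ?thesis by simp
  qed
  have V1: "V ** dagger V = mat 1" and W1: "dagger W ** W = mat 1"
    using V W unitary_def by auto
  have "X ** dagger X = mat 1" unfolding X_def dagger_mult dagger_dagger
    using V1 W1 by (simp add: matrix_mul_assoc) (simp add: matrix_mul_assoc[symmetric])
  then have "(X ** dagger X) $ i $ i = 1" by (simp add: mat_def)
  moreover have "(X ** dagger X) $ i $ i = 0" by (simp add: matrix_matrix_mult_def z)
  ultimately show False by simp
qed

lemma sum_univ_pair: "(\<Sum>r\<in>UNIV. g r) = (\<Sum>k\<in>UNIV. \<Sum>l\<in>UNIV. g (k, l))"
proof -
  have "(\<Sum>r\<in>UNIV. g r) = (\<Sum>r\<in>UNIV \<times> UNIV. g r)" by simp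
  also have "\<dots> = (\<Sum>k\<in>UNIV. \<Sum>l\<in>UNIV. g (k, l))" by (subst sum.cartesian_product) simp
  finally show ?thesis .
qed

lemma tensor_mult: "tensor A B ** tensor C D = tensor (A ** C) (B ** D)"
proof -
  have "(tensor A B ** tensor C D) $ p $ q = tensor (A ** C) (B ** D) $ p $ q" for p q
  proof -
    have "(tensor A B ** tensor C D) $ p $ q =
      (\<Sum>r\<in>UNIV. (A $ fst p $ fst r * C $ fst r $ fst q) * (B $ snd p $ snd r * D $ snd r $ snd q))"
      by (simp add: matrix_matrix_mult_def tensor_def mult_ac)
    also have "\<dots> = (\<Sum>k\<in>UNIV. A $ fst p $ k * C $ k $ fst q) * (\<Sum>l\<in>UNIV. B $ snd p $ l * D $ l $ snd q)"
      by (simp add: sum_product sum_univ_pair)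
    finally show ?thesis by (simp add: tensor_def matrix_matrix_mult_def)
  qed
  then show ?thesis by (simp add: vec_eq_iff)
qed

lemma dagger_tensor: "dagger (tensor A B) = tensor (dagger A) (dagger B)"
  by (simp add: vec_eq_iff dagger_def tensor_def)

lemma mat1_diag: "mat c = diag (\<lambda>_. c)"
  by (simp add: vec_eq_iff mat_def diag_def)

lemma tensor_diag: "tensor (diag a) (diag b) = diag (\<lambda>p. a (fst p) * b (snd p))"
  by (auto simp: vec_eq_iff diag_def tensor_def prod_eq_iff)

lemma diag_add: "diag a + diag b = diag (\<lambda>i. a i + b i)"
  by (simp add: vec_eq_iff diag_def)

lemma tensor_one: "tensor (mat 1 :: 'a::finite cmat) (mat 1 :: 'b::finite cmat) = mat 1"
  by (simp add: mat1_diag tensor_diag)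

lemma unitary_mult: "unitary U \<Longrightarrow> unitary V \<Longrightarrow> unitary (U ** V)"
  unfolding unitary_def dagger_mult
  by (metis matrix_mul_assoc matrix_mul_lid)

lemma unitary_tensor: "unitary U \<Longrightarrow> unitary V \<Longrightarrow> unitary (tensor U V)"
  unfolding unitary_def by (simp add: dagger_tensor tensor_mult tensor_one)

lemma tensor_conj:
  "tensor (V ** D ** dagger V) (W ** E ** dagger W) = tensor V W ** tensor D E ** dagger (tensor V W)"
  by (simp add: tensor_mult dagger_tensor)

lemma conj_conj: "U ** (T ** D ** dagger T) ** dagger U = (U ** T) ** D ** dagger (U ** T)"
  by (simp add: dagger_mult matrix_mul_assoc)

lemma trace_conj: "unitary V \<Longrightarrow> trace (V ** M ** dagger V) = trace M"
  unfolding unitary_def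
  by (metis matrix_mul_assoc matrix_mul_lid trace_mul_sym)

lemma trace_diag: "trace (diag d) = (\<Sum>i\<in>UNIV. d i)"
  by (simp add: trace_def diag_def)

lemma trace_tensor: "trace (tensor A B) = trace A * trace B"
  by (simp add: trace_def tensor_def sum_product sum_univ_pair)

lemma diag_mult: "diag a ** diag b = diag (\<lambda>i. a i * b i)"
  by (simp add: vec_eq_iff mat_mult_diag) (simp add: diag_def)

lemma scalar_conj:
  fixes V :: "'n::finite cmat"
  assumes V: "unitary V"
  shows "V ** diag d ** dagger V = mat c \<longleftrightarrow> (\<forall>i. d i = c)"
proof
  have V1: "dagger V ** V = mat 1" "V ** dagger V = mat 1" using V unitary_def by auto
  have comm: "M ** mat c = mat c ** M" for M :: "'n cmat"
    by (simp add: mat1_diag vec_eq_iff mat_mult_diag diag_mat_mult mult.commute)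
  assume h: "V ** diag d ** dagger V = mat c"
  have "diag d = (dagger V ** V) ** diag d ** (dagger V ** V)" using V1 by simp
  also have "\<dots> = dagger V ** (V ** diag d ** dagger V) ** V" by (simp only: matrix_mul_assoc)
  also have "\<dots> = dagger V ** mat c ** V" using h by simp
  also have "\<dots> = mat c" using V1 comm by (metis matrix_mul_assoc matrix_mul_rid)
  finally have "diag d = mat c" .
  show "\<forall>i. d i = c"
  proof
    fix i
    from arg_cong[OF \<open>diag d = mat c\<close>, of "\<lambda>M. M $ i $ i"] show "d i = c"
      by (simp add: diag_def mat_def)
  qed
next
  have V1: "V ** dagger V = mat 1" using V unitary_def by auto
  have comm: "M ** mat c = mat c ** M" for M :: "'n cmat"
    by (simp add: mat1_diag vec_eq_iff mat_mult_diag diag_mat_mult mult.commute)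
  assume "\<forall>i. d i = c"
  then have "d = (\<lambda>_. c)" by auto
  then have "diag d = mat c" by (simp add: mat1_diag)
  then show "V ** diag d ** dagger V = mat c"
    using V1 comm by (metis matrix_mul_assoc matrix_mul_lid)
qed

lemma herm_conj: "hermitian (V ** diag (\<lambda>i. complex_of_real (d i)) ** dagger V)"
  unfolding hermitian_def by (simp add: dagger_mult diag_real_herm matrix_mul_assoc)

lemma diag_vec: "(diag d *v x) $ k = d k * x $ k"
  by (simp add: matrix_vector_mult_def diag_def sum_delta_l)

lemma quad_cinner: "(\<Sum>i\<in>UNIV. cnj (v $ i) * (A *v v) $ i) = cinner v (A *v v)"
  by (simp add: cinner_def)

lemma conj_vec: "(V ** D ** dagger V) *v v = V *v (D *v (dagger V *v v))"
  by (simp add: matrix_vector_mul_assoc matrix_mul_assoc)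

lemma mat_vec_smult: "(A::complex^'n^'m) *v (c *s x) = c *s (A *v x)"
  by (simp add: vec_eq_iff matrix_vector_mult_def sum_distrib_left mult_ac)

lemma density_conj:
  fixes V :: "'n::finite cmat"
  assumes V: "unitary V" and p: "\<forall>i. p i \<ge> 0" and s: "(\<Sum>i\<in>UNIV. p i) = 1"
  shows "density_op (V ** diag (\<lambda>i. complex_of_real (p i)) ** dagger V)"
proof -
  let ?D = "diag (\<lambda>i. complex_of_real (p i))"
  have "0 \<le> Re (\<Sum>i\<in>UNIV. cnj (v $ i) * ((V ** ?D ** dagger V) *v v) $ i)" for v
  proof -
    define w where "w = dagger V *v v"
    have "(\<Sum>i\<in>UNIV. cnj (v $ i) * ((V ** ?D ** dagger V) *v v) $ i) = cinner v (V *v (?D *v w))"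
      unfolding quad_cinner by (simp only: conj_vec w_def)
    also have "\<dots> = cinner (dagger V *v v) (?D *v w)" by (rule cinner_dagger)
    also have "\<dots> = cinner w (?D *v w)" unfolding w_def ..
    also have "\<dots> = (\<Sum>i\<in>UNIV. cnj (w $ i) * (of_real (p i) * w $ i))"
      by (simp add: cinner_def diag_vec)
    finally have eq: "(\<Sum>i\<in>UNIV. cnj (v $ i) * ((V ** ?D ** dagger V) *v v) $ i) =
        (\<Sum>i\<in>UNIV. cnj (w $ i) * (of_real (p i) * w $ i))" .
    have "Re (cnj (w $ i) * (of_real (p i) * w $ i)) = p i * ((Re (w $ i))^2 + (Im (w $ i))^2)" for i
      by (simp add: power2_eq_square algebra_simps)
    then have "Re (\<Sum>i\<in>UNIV. cnj (w $ i) * (of_real (p i) * w $ i)) =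
       (\<Sum>i\<in>UNIV. p i * ((Re (w $ i))^2 + (Im (w $ i))^2))" by (simp add: Re_sum)
    also have "\<dots> \<ge> 0" using p by (intro sum_nonneg) simp
    finally show ?thesis using eq by simp
  qed
  moreover have "trace (V ** ?D ** dagger V) = 1"
    using s by (simp add: trace_conj[OF V] trace_diag flip: of_real_sum)
  ultimately show ?thesis
    unfolding density_op_def positive_semidef_def by (simp add: herm_conj)
qed

lemma full_rank_conj:
  fixes V :: "'n::finite cmat"
  assumes V: "unitary V" and p: "\<forall>i. p i \<noteq> 0"
  shows "invertible (V ** diag p ** dagger V)"
proof -
  have V1: "dagger V ** V = mat 1" "V ** dagger V = mat 1" using V unitary_def by auto
  have "(V ** diag p ** dagger V) ** (V ** diag (\<lambda>i. inverse (p i)) ** dagger V)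
      = V ** diag p ** (dagger V ** V) ** diag (\<lambda>i. inverse (p i)) ** dagger V"
    by (simp only: matrix_mul_assoc)
  also have "\<dots> = V ** (diag p ** diag (\<lambda>i. inverse (p i))) ** dagger V"
    using V1 by (simp add: matrix_mul_assoc)
  also have "\<dots> = mat 1" using p V1 by (simp add: diag_mult mat1_diag[symmetric])
  finally show ?thesis unfolding invertible_def using matrix_left_right_inverse by blast
qed

lemma pos_eig:
  fixes V :: "'n::finite cmat"
  assumes V: "unitary V"
    and psd: "positive_semidef (V ** diag (\<lambda>i. complex_of_real (a i)) ** dagger V)"
    and inv: "invertible (V ** diag (\<lambda>i. complex_of_real (a i)) ** dagger V)"
  shows "a i > 0"
proof -
  let ?D = "diag (\<lambda>i. complex_of_real (a i))"
  let ?M = "V ** ?D ** dagger V"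
  have V1: "dagger V ** V = mat 1" "V ** dagger V = mat 1" using V unitary_def by auto
  define e :: "complex^'n" where "e = (\<chi> k. if k = i then 1 else 0)"
  define w where "w = V *v e"
  have De: "?D *v e = of_real (a i) *s e"
    by (simp add: vec_eq_iff diag_vec e_def)
  have "?M *v w = V *v (?D *v ((dagger V ** V) *v e))"
    unfolding conj_vec w_def by (simp only: matrix_vector_mul_assoc)
  also have "\<dots> = V *v (of_real (a i) *s e)" using V1 De by simp
  also have "\<dots> = of_real (a i) *s w" unfolding w_def by (rule mat_vec_smult)
  finally have Mw: "?M *v w = of_real (a i) *s w" .
  have "cinner w w = cinner ((dagger V ** V) *v e) e"
    unfolding w_def by (simp add: cinner_dagger matrix_vector_mul_assoc)
  also have "\<dots> = 1"
  proof -
    have h: "cnj (if ia = i then 1 else 0) * (if ia = i then (1::complex) else 0) = (if ia = i then 1 else 0)" for ia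
      by simp
    show ?thesis using V1 by (simp add: cinner_def e_def h)
  qed
  finally have ww: "cinner w w = 1" .
  have "0 \<le> Re (cinner w (?M *v w))"
    using psd unfolding positive_semidef_def quad_cinner by blast
  also have "cinner w (?M *v w) = of_real (a i) * cinner w w"
    unfolding Mw by (simp add: cinner_def sum_distrib_left mult_ac)
  also have "\<dots> = of_real (a i)" using ww by simp
  finally have ge: "a i \<ge> 0" by simp
  have "a i \<noteq> 0"
  proof
    assume "a i = 0"
    then have "?M *v w = 0" using Mw by (simp add: vec_eq_iff)
    moreover obtain B where "B ** ?M = mat 1"
      using inv unfolding invertible_def by blast
    ultimately have "w = 0" by (metis matrix_vector_mul_assoc matrix_vector_mul_lid matrix_vector_mult_0_right)
    then show False using ww by simp
  qed
  then show ?thesis using ge by simp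
qed

lemma matrix_add_rdistrib': "((B + C) ** A) = (B ** A) + (C ** A)"
  by (vector matrix_matrix_mult_def sum.distrib[symmetric] field_simps)

lemma unitary_id: "unitary V \<Longrightarrow> V ** diag (\<lambda>_. 1) ** dagger V = mat 1"
  by (simp add: mat1_diag[symmetric] unitary_def)

lemma prod_form:
  "tensor (VA ** diag a ** dagger VA) (VB ** diag b ** dagger VB) =
     tensor VA VB ** diag (\<lambda>p. a (fst p) * b (snd p)) ** dagger (tensor VA VB)"
  by (simp add: tensor_conj tensor_diag)

lemma sum_form:
  assumes VA: "unitary VA" and VB: "unitary VB"
  shows "tensor (VA ** diag a ** dagger VA) (mat 1) + tensor (mat 1) (VB ** diag b ** dagger VB) =
     tensor VA VB ** diag (\<lambda>p. a (fst p) + b (snd p)) ** dagger (tensor VA VB)"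
proof -
  let ?T = "tensor VA VB"
  have "tensor (VA ** diag a ** dagger VA) (mat 1) = ?T ** diag (\<lambda>p. a (fst p)) ** dagger ?T"
    using prod_form[of VA a VB "\<lambda>_. 1"] unitary_id[OF VB] by simp
  moreover have "tensor (mat 1) (VB ** diag b ** dagger VB) = ?T ** diag (\<lambda>p. b (snd p)) ** dagger ?T"
    using prod_form[of VA "\<lambda>_. 1" VB b] unitary_id[OF VA] by simp
  moreover have "?T ** diag (\<lambda>p. a (fst p)) ** dagger ?T + ?T ** diag (\<lambda>p. b (snd p)) ** dagger ?T
      = (?T ** diag (\<lambda>p. a (fst p)) + ?T ** diag (\<lambda>p. b (snd p))) ** dagger ?T"
    by (rule matrix_add_rdistrib'[symmetric])
  moreover have "\<dots> = (?T ** (diag (\<lambda>p. a (fst p)) + diag (\<lambda>p. b (snd p)))) ** dagger ?T"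
    by (simp only: matrix_add_ldistrib)
  moreover have "\<dots> = ?T ** diag (\<lambda>p. a (fst p) + b (snd p)) ** dagger ?T"
    by (simp only: diag_add)
  ultimately show ?thesis by simp
qed

lemma nonmm_fwd:
  fixes V :: "'n::finite cmat"
  assumes V: "unitary V" and Z: "Z > 0"
    and ns: "\<nexists>c. V ** diag (\<lambda>i. complex_of_real (a i)) ** dagger V = mat c"
  shows "\<not> maximally_mixed (V ** diag (\<lambda>i. complex_of_real (exp (a i) / Z)) ** dagger V)"
proof
  assume "maximally_mixed (V ** diag (\<lambda>i. complex_of_real (exp (a i) / Z)) ** dagger V)"
  then have "\<forall>i. complex_of_real (exp (a i) / Z) = 1 / of_nat CARD('n)"
    unfolding maximally_mixed_def scalar_conj[OF V] .
  then have h: "\<And>i. complex_of_real (exp (a i) / Z) = 1 / of_nat CARD('n)" by blast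
  have aij: "a i = a j" for i j
  proof -
    have "complex_of_real (exp (a i) / Z) = complex_of_real (exp (a j) / Z)" using h[of i] h[of j] by simp
    then have "exp (a i) / Z = exp (a j) / Z" by (simp only: of_real_eq_iff)
    then have "exp (a i) = exp (a j)" using Z by (simp add: divide_cancel_right)
    then show ?thesis by simp
  qed
  have "\<forall>i. complex_of_real (a i) = complex_of_real (a (undefined))"
  proof
    fix i show "complex_of_real (a i) = complex_of_real (a (undefined))" using aij[of i undefined] by simp
  qed
  then have "V ** diag (\<lambda>i. complex_of_real (a i)) ** dagger V = mat (complex_of_real (a undefined))"
    using scalar_conj[OF V] by blast
  then show False using ns by blast
qed

lemma nonscalar_bwd:
  fixes V :: "'n::finite cmat"
  assumes V: "unitary V" and pos: "\<forall>i. a i > 0"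
    and tr: "trace (V ** diag (\<lambda>i. complex_of_real (a i)) ** dagger V) = 1"
    and sc: "V ** diag (\<lambda>i. complex_of_real (ln (a i))) ** dagger V = mat c"
  shows "maximally_mixed (V ** diag (\<lambda>i. complex_of_real (a i)) ** dagger V)"
proof -
  have h: "\<forall>i. complex_of_real (ln (a i)) = c" using scalar_conj[OF V, THEN iffD1, OF sc] .
  have eqa: "a i = a j" for i j
  proof -
    have "complex_of_real (ln (a i)) = complex_of_real (ln (a j))" using h[rule_format, of i] h[rule_format, of j] by simp
    then have "ln (a i) = ln (a j)" by (simp only: of_real_eq_iff)
    moreover have "a i > 0" "a j > 0" using pos by auto
    ultimately show ?thesis by simp
  qed
  define r where "r = a undefined"
  have ar: "\<forall>i. complex_of_real (a i) = complex_of_real r"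
  proof
    fix i show "complex_of_real (a i) = complex_of_real r" unfolding r_def using eqa[of i undefined] by (simp only:)
  qed
  have M: "V ** diag (\<lambda>i. complex_of_real (a i)) ** dagger V = mat (complex_of_real r)"
    by (rule scalar_conj[OF V, THEN iffD2, OF ar])
  have "trace (mat (complex_of_real r) :: 'n cmat) = of_nat CARD('n) * complex_of_real r"
    by (simp add: trace_def mat_def)
  moreover have "trace (mat (complex_of_real r) :: 'n cmat) = 1" using tr unfolding M .
  ultimately have "of_nat CARD('n) * complex_of_real r = 1" by simp
  then have "complex_of_real r = 1 / of_nat CARD('n)" by (simp add: field_simps)
  then show ?thesis unfolding maximally_mixed_def M by simp
qed

lemma fwd:
  fixes U :: "('a::finite \<times> 'b::finite) cmat"
  assumes U: "unitary U" and g: "generalized_thermal_unitary U"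
  shows "\<exists>(\<alpha> :: 'a cmat) (\<beta> :: 'b cmat) \<alpha>' \<beta>'.
       density_op \<alpha> \<and> density_op \<beta> \<and> full_rank \<alpha> \<and> full_rank \<beta> \<and>
       \<not> (maximally_mixed \<alpha> \<and> maximally_mixed \<beta>) \<and>
       density_op \<alpha>' \<and> density_op \<beta>' \<and>
       U ** tensor \<alpha> \<beta> ** dagger U = tensor \<alpha>' \<beta>'"
proof -
  obtain HA HA2 :: "'a cmat" and HB HB2 :: "'b cmat" where
    hA: "hermitian HA" and hA2: "hermitian HA2" and hB: "hermitian HB" and hB2: "hermitian HB2"
    and ns: "(\<nexists>c. HA = mat c) \<or> (\<nexists>c. HB = mat c)"
    and eq: "U ** (tensor HA (mat 1) + tensor (mat 1) HB) ** dagger U = tensor HA2 (mat 1) + tensor (mat 1) HB2"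
    using g unfolding generalized_thermal_unitary_def by blast
  obtain VA a where VA: "unitary VA" and HAe: "HA = VA ** diag (\<lambda>i. complex_of_real (a i)) ** dagger VA"
    using spectral[OF hA] by blast
  obtain VB b where VB: "unitary VB" and HBe: "HB = VB ** diag (\<lambda>i. complex_of_real (b i)) ** dagger VB"
    using spectral[OF hB] by blast
  obtain VA2 a2 where VA2: "unitary VA2" and HA2e: "HA2 = VA2 ** diag (\<lambda>i. complex_of_real (a2 i)) ** dagger VA2"
    using spectral[OF hA2] by blast
  obtain VB2 b2 where VB2: "unitary VB2" and HB2e: "HB2 = VB2 ** diag (\<lambda>i. complex_of_real (b2 i)) ** dagger VB2"
    using spectral[OF hB2] by blast
  define T where "T = tensor VA VB"
  define T2 where "T2 = tensor VA2 VB2"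
  define UT where "UT = U ** T"
  have uUT: "unitary UT" unfolding UT_def T_def by (intro unitary_mult unitary_tensor U VA VB)
  have uT2: "unitary T2" unfolding T2_def by (intro unitary_tensor VA2 VB2)
  define s where "s = (\<lambda>p. complex_of_real (a (fst p)) + complex_of_real (b (snd p)))"
  define s2 where "s2 = (\<lambda>p. complex_of_real (a2 (fst p)) + complex_of_real (b2 (snd p)))"
  have E: "UT ** diag s ** dagger UT = T2 ** diag s2 ** dagger T2"
  proof -
    have "tensor HA (mat 1) + tensor (mat 1) HB = T ** diag s ** dagger T"
      unfolding HAe HBe T_def s_def by (rule sum_form[OF VA VB])
    moreover have "tensor HA2 (mat 1) + tensor (mat 1) HB2 = T2 ** diag s2 ** dagger T2"
      unfolding HA2e HB2e T2_def s2_def by (rule sum_form[OF VA2 VB2])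
    moreover have "U ** (T ** diag s ** dagger T) ** dagger U = UT ** diag s ** dagger UT"
      unfolding UT_def by (rule conj_conj)
    ultimately show ?thesis using eq by simp
  qed
  define ZA where "ZA = (\<Sum>i\<in>UNIV. exp (a i))"
  define ZB where "ZB = (\<Sum>i\<in>UNIV. exp (b i))"
  define ZA2 where "ZA2 = (\<Sum>i\<in>UNIV. exp (a2 i))"
  define ZB2 where "ZB2 = (\<Sum>i\<in>UNIV. exp (b2 i))"
  have ZApos: "ZA > 0" unfolding ZA_def by (intro sum_pos) auto
  have ZBpos: "ZB > 0" unfolding ZB_def by (intro sum_pos) auto
  have ZA2pos: "ZA2 > 0" unfolding ZA2_def by (intro sum_pos) auto
  have ZB2pos: "ZB2 > 0" unfolding ZB2_def by (intro sum_pos) auto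
  define f0 where "f0 = (\<lambda>z::complex. complex_of_real (exp (Re z)))"
  have E0: "UT ** diag (\<lambda>p. f0 (s p)) ** dagger UT = T2 ** diag (\<lambda>p. f0 (s2 p)) ** dagger T2"
    by (rule fc_welldef[OF uUT uT2 E])
  have tr0: "(\<Sum>p\<in>UNIV. f0 (s p)) = (\<Sum>p\<in>UNIV. f0 (s2 p))"
    using arg_cong[OF E0, of trace] by (simp add: trace_conj[OF uUT] trace_conj[OF uT2] trace_diag)
  have sumZ: "(\<Sum>p\<in>UNIV. f0 (s p)) = complex_of_real (ZA * ZB)"
    by (simp add: f0_def s_def sum_univ_pair ZA_def ZB_def sum_product exp_add)
  have sumZ2: "(\<Sum>p\<in>UNIV. f0 (s2 p)) = complex_of_real (ZA2 * ZB2)"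
    by (simp add: f0_def s2_def sum_univ_pair ZA2_def ZB2_def sum_product exp_add)
  have ZZ: "ZA * ZB = ZA2 * ZB2" using tr0 sumZ sumZ2 by (metis of_real_eq_iff)
  define f1 where "f1 = (\<lambda>z::complex. complex_of_real (exp (Re z) / (ZA * ZB)))"
  have E1: "UT ** diag (\<lambda>p. f1 (s p)) ** dagger UT = T2 ** diag (\<lambda>p. f1 (s2 p)) ** dagger T2"
    by (rule fc_welldef[OF uUT uT2 E])
  define \<alpha> where "\<alpha> = VA ** diag (\<lambda>i. complex_of_real (exp (a i) / ZA)) ** dagger VA"
  define \<beta> where "\<beta> = VB ** diag (\<lambda>i. complex_of_real (exp (b i) / ZB)) ** dagger VB"
  define \<alpha>2 where "\<alpha>2 = VA2 ** diag (\<lambda>i. complex_of_real (exp (a2 i) / ZA2)) ** dagger VA2"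
  define \<beta>2 where "\<beta>2 = VB2 ** diag (\<lambda>i. complex_of_real (exp (b2 i) / ZB2)) ** dagger VB2"
  have t1: "tensor \<alpha> \<beta> = T ** diag (\<lambda>p. f1 (s p)) ** dagger T"
  proof -
    have "(\<lambda>p. complex_of_real (exp (a (fst p)) / ZA) * complex_of_real (exp (b (snd p)) / ZB)) = (\<lambda>p. f1 (s p))"
      by (rule ext) (simp add: f1_def s_def exp_add)
    then show ?thesis unfolding \<alpha>_def \<beta>_def T_def prod_form by simp
  qed
  have t2: "tensor \<alpha>2 \<beta>2 = T2 ** diag (\<lambda>p. f1 (s2 p)) ** dagger T2"
  proof -
    have "(\<lambda>p. complex_of_real (exp (a2 (fst p)) / ZA2) * complex_of_real (exp (b2 (snd p)) / ZB2)) = (\<lambda>p. f1 (s2 p))"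
      by (rule ext) (simp add: f1_def s2_def exp_add ZZ)
    then show ?thesis unfolding \<alpha>2_def \<beta>2_def T2_def prod_form by simp
  qed
  have main: "U ** tensor \<alpha> \<beta> ** dagger U = tensor \<alpha>2 \<beta>2"
    unfolding t1 t2 conj_conj UT_def[symmetric] by (rule E1)
  have dens: "density_op (V ** diag (\<lambda>i. complex_of_real (exp (c i) / Z)) ** dagger V)"
    and fr: "full_rank (V ** diag (\<lambda>i. complex_of_real (exp (c i) / Z)) ** dagger V)"
    if V: "unitary V" and Z: "Z = (\<Sum>i\<in>UNIV. exp (c i))" for V :: "'n::finite cmat" and c Z
  proof -
    have Zp: "Z > 0" unfolding Z by (intro sum_pos) auto
    have "(\<Sum>i\<in>UNIV. exp (c i) / Z) = 1" using Zp by (simp add: sum_divide_distrib[symmetric] Z)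
    then show "density_op (V ** diag (\<lambda>i. complex_of_real (exp (c i) / Z)) ** dagger V)"
      using Zp by (intro density_conj[OF V]) auto
    show "full_rank (V ** diag (\<lambda>i. complex_of_real (exp (c i) / Z)) ** dagger V)"
      unfolding full_rank_def using Zp by (intro full_rank_conj[OF V]) auto
  qed
  have nmm: "\<not> (maximally_mixed \<alpha> \<and> maximally_mixed \<beta>)"
    using ns nonmm_fwd[OF VA ZApos, of a] nonmm_fwd[OF VB ZBpos, of b] HAe HBe
    unfolding \<alpha>_def \<beta>_def by blast
  show ?thesis
    apply (rule exI[of _ \<alpha>], rule exI[of _ \<beta>], rule exI[of _ \<alpha>2], rule exI[of _ \<beta>2])
    using dens[OF VA ZA_def] dens[OF VB ZB_def] dens[OF VA2 ZA2_def] dens[OF VB2 ZB2_def]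
      fr[OF VA ZA_def] fr[OF VB ZB_def] nmm main
    unfolding \<alpha>_def \<beta>_def \<alpha>2_def \<beta>2_def by blast
qed

lemma bwd:
  fixes U :: "('a::finite \<times> 'b::finite) cmat"
  assumes U: "unitary U"
    and ex: "\<exists>(\<alpha> :: 'a cmat) (\<beta> :: 'b cmat) \<alpha>' \<beta>'.
       density_op \<alpha> \<and> density_op \<beta> \<and> full_rank \<alpha> \<and> full_rank \<beta> \<and>
       \<not> (maximally_mixed \<alpha> \<and> maximally_mixed \<beta>) \<and>
       density_op \<alpha>' \<and> density_op \<beta>' \<and>
       U ** tensor \<alpha> \<beta> ** dagger U = tensor \<alpha>' \<beta>'"
  shows "generalized_thermal_unitary U"
proof -
  obtain \<alpha> \<alpha>2 :: "'a cmat" and \<beta> \<beta>2 :: "'b cmat" where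
    d\<alpha>: "density_op \<alpha>" and d\<beta>: "density_op \<beta>" and f\<alpha>: "full_rank \<alpha>" and f\<beta>: "full_rank \<beta>"
    and nmm: "\<not> (maximally_mixed \<alpha> \<and> maximally_mixed \<beta>)"
    and d\<alpha>2: "density_op \<alpha>2" and d\<beta>2: "density_op \<beta>2"
    and eq: "U ** tensor \<alpha> \<beta> ** dagger U = tensor \<alpha>2 \<beta>2"
    using ex by blast
  have herm: "hermitian M" if "density_op M" for M :: "'n::finite cmat"
    using that unfolding density_op_def positive_semidef_def by blast
  obtain VA a where VA: "unitary VA" and \<alpha>e: "\<alpha> = VA ** diag (\<lambda>i. complex_of_real (a i)) ** dagger VA"
    using spectral[OF herm[OF d\<alpha>]] by blast
  obtain VB b where VB: "unitary VB" and \<beta>e: "\<beta> = VB ** diag (\<lambda>i. complex_of_real (b i)) ** dagger VB"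
    using spectral[OF herm[OF d\<beta>]] by blast
  obtain VA2 a2 where VA2: "unitary VA2" and \<alpha>2e: "\<alpha>2 = VA2 ** diag (\<lambda>i. complex_of_real (a2 i)) ** dagger VA2"
    using spectral[OF herm[OF d\<alpha>2]] by blast
  obtain VB2 b2 where VB2: "unitary VB2" and \<beta>2e: "\<beta>2 = VB2 ** diag (\<lambda>i. complex_of_real (b2 i)) ** dagger VB2"
    using spectral[OF herm[OF d\<beta>2]] by blast
  have apos: "\<forall>i. a i > 0"
  proof
    fix i show "a i > 0"
      using pos_eig[OF VA, of a i] d\<alpha> f\<alpha> unfolding \<alpha>e density_op_def full_rank_def by blast
  qed
  have bpos: "\<forall>i. b i > 0"
  proof
    fix i show "b i > 0"
      using pos_eig[OF VB, of b i] d\<beta> f\<beta> unfolding \<beta>e density_op_def full_rank_def by blast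
  qed
  define T where "T = tensor VA VB"
  define T2 where "T2 = tensor VA2 VB2"
  define UT where "UT = U ** T"
  have uUT: "unitary UT" unfolding UT_def T_def by (intro unitary_mult unitary_tensor U VA VB)
  have uT2: "unitary T2" unfolding T2_def by (intro unitary_tensor VA2 VB2)
  define s where "s = (\<lambda>p. complex_of_real (a (fst p)) * complex_of_real (b (snd p)))"
  define s2 where "s2 = (\<lambda>p. complex_of_real (a2 (fst p)) * complex_of_real (b2 (snd p)))"
  have E: "UT ** diag s ** dagger UT = T2 ** diag s2 ** dagger T2"
  proof -
    have "tensor \<alpha> \<beta> = T ** diag s ** dagger T"
      unfolding \<alpha>e \<beta>e T_def s_def by (rule prod_form)
    moreover have "tensor \<alpha>2 \<beta>2 = T2 ** diag s2 ** dagger T2"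
      unfolding \<alpha>2e \<beta>2e T2_def s2_def by (rule prod_form)
    moreover have "U ** (T ** diag s ** dagger T) ** dagger U = UT ** diag s ** dagger UT"
      unfolding UT_def by (rule conj_conj)
    ultimately show ?thesis using eq by simp
  qed
  have nz: "a2 k \<noteq> 0 \<and> b2 l \<noteq> 0" for k l
  proof -
    obtain q where "s2 (k, l) = s q" using fc_spec[OF uUT uT2 E] by blast
    moreover have "s q \<noteq> 0" unfolding s_def using apos bpos by (simp add: less_imp_neq[symmetric])
    ultimately show ?thesis unfolding s2_def by auto
  qed
  define f where "f = (\<lambda>z::complex. complex_of_real (ln (cmod z)))"
  have E2: "UT ** diag (\<lambda>p. f (s p)) ** dagger UT = T2 ** diag (\<lambda>p. f (s2 p)) ** dagger T2"
    by (rule fc_welldef[OF uUT uT2 E])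
  define HA where "HA = VA ** diag (\<lambda>i. complex_of_real (ln (a i))) ** dagger VA"
  define HB where "HB = VB ** diag (\<lambda>i. complex_of_real (ln (b i))) ** dagger VB"
  define HA2 where "HA2 = VA2 ** diag (\<lambda>i. complex_of_real (ln \<bar>a2 i\<bar>)) ** dagger VA2"
  define HB2 where "HB2 = VB2 ** diag (\<lambda>i. complex_of_real (ln \<bar>b2 i\<bar>)) ** dagger VB2"
  have S1: "tensor HA (mat 1) + tensor (mat 1) HB = T ** diag (\<lambda>p. f (s p)) ** dagger T"
  proof -
    have "(\<lambda>p. complex_of_real (ln (a (fst p))) + complex_of_real (ln (b (snd p)))) = (\<lambda>p. f (s p))"
    proof
      fix p
      have "a (fst p) > 0" "b (snd p) > 0" using apos bpos by auto
      then have "ln (a (fst p) * b (snd p)) = ln (a (fst p)) + ln (b (snd p))"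
        by (simp add: ln_mult)
      moreover have "cmod (s p) = a (fst p) * b (snd p)"
        unfolding s_def using apos bpos by (simp add: norm_mult less_imp_le)
      ultimately show "complex_of_real (ln (a (fst p))) + complex_of_real (ln (b (snd p))) = f (s p)"
        unfolding f_def by simp
    qed
    then show ?thesis unfolding HA_def HB_def T_def sum_form[OF VA VB] by simp
  qed
  have S2: "tensor HA2 (mat 1) + tensor (mat 1) HB2 = T2 ** diag (\<lambda>p. f (s2 p)) ** dagger T2"
  proof -
    have "(\<lambda>p. complex_of_real (ln \<bar>a2 (fst p)\<bar>) + complex_of_real (ln \<bar>b2 (snd p)\<bar>)) = (\<lambda>p. f (s2 p))"
    proof
      fix p
      have "\<bar>a2 (fst p)\<bar> > 0" "\<bar>b2 (snd p)\<bar> > 0" using nz by auto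
      then have "ln (\<bar>a2 (fst p)\<bar> * \<bar>b2 (snd p)\<bar>) = ln \<bar>a2 (fst p)\<bar> + ln \<bar>b2 (snd p)\<bar>"
        by (simp add: ln_mult)
      moreover have "cmod (s2 p) = \<bar>a2 (fst p)\<bar> * \<bar>b2 (snd p)\<bar>"
        unfolding s2_def by (simp add: norm_mult)
      ultimately show "complex_of_real (ln \<bar>a2 (fst p)\<bar>) + complex_of_real (ln \<bar>b2 (snd p)\<bar>) = f (s2 p)"
        unfolding f_def by simp
    qed
    then show ?thesis unfolding HA2_def HB2_def T2_def sum_form[OF VA2 VB2] by simp
  qed
  have main: "U ** (tensor HA (mat 1) + tensor (mat 1) HB) ** dagger U = tensor HA2 (mat 1) + tensor (mat 1) HB2"
    unfolding S1 S2 conj_conj UT_def[symmetric] by (rule E2)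
  have ns: "(\<nexists>c. HA = mat c) \<or> (\<nexists>c. HB = mat c)"
  proof (rule ccontr)
    assume "\<not> ((\<nexists>c. HA = mat c) \<or> (\<nexists>c. HB = mat c))"
    then obtain c1 c2 where c1: "HA = mat c1" and c2: "HB = mat c2" by blast
    have tr\<alpha>: "trace (VA ** diag (\<lambda>i. complex_of_real (a i)) ** dagger VA) = 1"
      using d\<alpha> unfolding \<alpha>e density_op_def by blast
    have tr\<beta>: "trace (VB ** diag (\<lambda>i. complex_of_real (b i)) ** dagger VB) = 1"
      using d\<beta> unfolding \<beta>e density_op_def by blast
    have "maximally_mixed \<alpha>" unfolding \<alpha>e
      by (rule nonscalar_bwd[OF VA apos tr\<alpha> c1[unfolded HA_def]])
    moreover have "maximally_mixed \<beta>" unfolding \<beta>e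
      by (rule nonscalar_bwd[OF VB bpos tr\<beta> c2[unfolded HB_def]])
    ultimately show False using nmm by blast
  qed
  have h: "hermitian HA" "hermitian HB" "hermitian HA2" "hermitian HB2"
    unfolding HA_def HB_def HA2_def HB2_def by (rule herm_conj)+
  show ?thesis
    unfolding generalized_thermal_unitary_def
    apply (rule conjI[OF U])
    apply (rule exI[of _ HA], rule exI[of _ HA2], rule exI[of _ HB], rule exI[of _ HB2])
    using h ns main by blast
qed

theorem theorem1:
  fixes U :: "('a::finite \<times> 'b::finite) cmat"
  assumes "unitary U"
  shows "generalized_thermal_unitary U \<longleftrightarrow>
    (\<exists>(\<alpha> :: 'a cmat) (\<beta> :: 'b cmat) \<alpha>' \<beta>'.
       density_op \<alpha> \<and> density_op \<beta> \<and> full_rank \<alpha> \<and> full_rank \<beta> \<and>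
       \<not> (maximally_mixed \<alpha> \<and> maximally_mixed \<beta>) \<and>
       density_op \<alpha>' \<and> density_op \<beta>' \<and>
       U ** tensor \<alpha> \<beta> ** dagger U = tensor \<alpha>' \<beta>')"
  using fwd[OF assms] bwd[OF assms] by blast

end
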